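(* Let $s$ be a positive integer and $r$ a nonnegative integer. Then \[ \sum_{D \in \mathcal{D}_{s,s}^{(r)}} q^{\mathrm{vmr}(D)} = q^{\binom{r+1}{2}}\begin{bmatrix}2s-1\\ s+r\end{bmatrix}_q. \]
   Context: A ballot path from $(0,0)$ to $(s+t,s-t)$ is a sequence of lattice points $v_0=(0,0),v_1,\ldots,v_{s+t}=(s+t,s-t)$ with each step $v_i-v_{i-1}\in\{(1,1),(1,-1)\}$ that never goes below the $x$-axis (for $s=t$ these are Dyck paths from $(0,0)$ to $(2s,0)$). A point $v_i$ ($0<i<s+t$) is a valley if $v_i-v_{i-1}=(1,-1)$ and $v_{i+1}-v_i=(1,1)$; a valley lying on the $x$-axis is a return. Each return may independently be marked or not; a marked path is a path together with a choice of which of its returns are marked. $\mathcal{D}_{s,t}^{(r)}$ is the set of marked ballot paths from $(0,0)$ to $(s+t,s-t)$ with at least $r$ marked returns. For such $D$, $\mathrm{maj}(D)$ is the sum of the $x$-coordinates of all valleys of $D$, and $\mathrm{vmr}(D)=\mathrm{maj}(D)-\frac12\sum x_i$, where the last sum runs over the $x$-coordinates $x_i$ of the marked returns of $D$. Notation: $(a;q)_n=(1-a)\cdots(1-aq^{n-1})$ and $\begin{bmatrix}n\\k\end{bmatrix}_q=\frac{(q;q)_n}{(q;q)_k(q;q)_{n-k}}$ for $n\ge k\ge0$, $0$ otherwise. *)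

theory Defs
  imports Complex_Main "HOL-Computational_Algebra.Polynomial"
begin

text \<open>A lattice path of length n is encoded as a list of n booleans:
  True = up step (1,1), False = down step (1,-1).  The point v_i has
  x-coordinate i and y-coordinate path_height p i.\<close>

definition path_height :: "bool list \<Rightarrow> nat \<Rightarrow> int" where
  "path_height p i = (\<Sum>j<i. if p ! j then 1 else -1)"

definition ballot_paths :: "nat \<Rightarrow> nat \<Rightarrow> bool list set" where
  "ballot_paths s t = {p. length p = s + t \<and> path_height p (s + t) = int s - int t
       \<and> (\<forall>i\<le>s + t. 0 \<le> path_height p i)}"

text \<open>Valleys: indices 0<i<length with step i down and step i+1 up
  (step k is the entry p ! (k-1)).  The x-coordinate of v_i is i.\<close>
definition valleys :: "bool list \<Rightarrow> nat set" where
  "valleys p = {i. 0 < i \<and> i < length p \<and> \<not> p ! (i - 1) \<and> p ! i}"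

definition returns :: "bool list \<Rightarrow> nat set" where
  "returns p = {i \<in> valleys p. path_height p i = 0}"

definition marked_paths :: "nat \<Rightarrow> nat \<Rightarrow> nat \<Rightarrow> (bool list \<times> nat set) set" where
  "marked_paths s t r = {(p, M). p \<in> ballot_paths s t \<and> M \<subseteq> returns p \<and> r \<le> card M}"

definition maj :: "bool list \<Rightarrow> nat" where
  "maj p = \<Sum>(valleys p)"

definition vmr :: "bool list \<times> nat set \<Rightarrow> real" where
  "vmr D = real (maj (fst D)) - (\<Sum>x\<in>snd D. real x) / 2"

definition qpoch :: "nat \<Rightarrow> real poly" where
  "qpoch n = (\<Prod>i\<in>{1..n}. 1 - monom 1 i)"

definition qbinom :: "nat \<Rightarrow> nat \<Rightarrow> real poly" where
  "qbinom n k = (if k \<le> n then qpoch n div (qpoch k * qpoch (n - k)) else 0)"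

end

theory Submission
  imports Defs
begin


fun gp :: "nat \<Rightarrow> nat \<Rightarrow> real poly" where
  "gp 0 k = (if k = 0 then 1 else 0)"
| "gp (Suc n) 0 = 1"
| "gp (Suc n) (Suc k) = gp n k + monom 1 (Suc k) * gp n (Suc k)"

lemma gp_zero: "n < k \<Longrightarrow> gp n k = 0"
proof (induction n arbitrary: k)
  case 0 then show ?case by simp
next
  case (Suc n) then obtain k' where "k = Suc k'" by (cases k) auto
  with Suc show ?case by simp
qed

lemma qpoch_0: "qpoch 0 = 1" by (simp add: qpoch_def)

lemma qpoch_Suc: "qpoch (Suc n) = qpoch n * (1 - monom 1 (Suc n))"
  by (simp add: qpoch_def atLeastAtMostSuc_conv mult.commute)

lemma qpoch_nz: "qpoch n \<noteq> 0"
proof (induction n)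
  case 0 then show ?case by (simp add: qpoch_0)
next
  case (Suc n)
  have c: "coeff (1 - monom (1::real) (Suc n)) 0 = 1" by (simp add: coeff_monom)
  have "1 - monom (1::real) (Suc n) \<noteq> 0"
  proof
    assume "1 - monom (1::real) (Suc n) = 0"
    then have "coeff (1 - monom (1::real) (Suc n)) 0 = 0" by simp
    with c show False by simp
  qed
  with Suc show ?case by (simp add: qpoch_Suc)
qed

lemma gp_prod: "k \<le> n \<Longrightarrow> qpoch k * qpoch (n - k) * gp n k = qpoch n"
proof (induction n arbitrary: k)
  case 0 then show ?case by (simp add: qpoch_0)
next
  case (Suc n)
  show ?case
  proof (cases k)
    case 0 then show ?thesis by (simp add: qpoch_0)
  next
    case (Suc k')
    have k': "k' \<le> n" using Suc.prems Suc by simp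
    have t1: "qpoch (Suc k') * qpoch (n - k') * gp n k' = (1 - monom 1 (Suc k')) * qpoch n"
      using Suc.IH[OF k'] by (simp add: qpoch_Suc algebra_simps)
    have t2: "qpoch (Suc k') * qpoch (n - k') * (monom 1 (Suc k') * gp n (Suc k'))
       = (monom 1 (Suc k') - monom 1 (Suc n)) * qpoch n"
    proof (cases "Suc k' \<le> n")
      case True
      have e: "n - k' = Suc (n - Suc k')" using True by simp
      have m: "monom (1::real) (Suc k') * monom 1 (n - k') = monom 1 (Suc n)"
        using True by (simp add: mult_monom)
      have "qpoch (Suc k') * qpoch (n - k') * (monom 1 (Suc k') * gp n (Suc k'))
        = (qpoch (Suc k') * qpoch (n - Suc k') * gp n (Suc k')) * (monom 1 (Suc k') * (1 - monom 1 (n - k')))"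
        by (simp only: e qpoch_Suc) (simp add: algebra_simps)
      also have "\<dots> = qpoch n * (monom 1 (Suc k') - monom 1 (Suc k') * monom 1 (n - k'))"
        using Suc.IH[OF True] by (simp add: algebra_simps)
      finally show ?thesis using m by (simp add: algebra_simps)
    next
      case False
      then have "k' = n" using k' by simp
      then show ?thesis by (simp add: gp_zero)
    qed
    have "gp (Suc n) k = gp n k' + monom 1 (Suc k') * gp n (Suc k')" using Suc by simp
    then have "qpoch k * qpoch (Suc n - k) * gp (Suc n) k
       = qpoch (Suc k') * qpoch (n - k') * gp n k' + qpoch (Suc k') * qpoch (n - k') * (monom 1 (Suc k') * gp n (Suc k'))"
      using Suc by (simp add: algebra_simps)
    also have "\<dots> = qpoch n * (1 - monom 1 (Suc n))" by (simp only: t1 t2) (simp add: algebra_simps)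
    finally show ?thesis by (simp add: qpoch_Suc)
  qed
qed

lemma qbinom_gp: "qbinom n k = gp n k"
proof (cases "k \<le> n")
  case True
  have nz: "qpoch k * qpoch (n - k) \<noteq> 0" by (simp add: qpoch_nz)
  have "qbinom n k = (gp n k * (qpoch k * qpoch (n - k))) div (qpoch k * qpoch (n - k))"
    using gp_prod[OF True] True by (simp add: qbinom_def algebra_simps)
  also have "\<dots> = gp n k" using nz by simp
  finally show ?thesis .
next
  case False then show ?thesis by (simp add: qbinom_def gp_zero)
qed

lemma qbinom_sym: "k \<le> n \<Longrightarrow> qbinom n k = qbinom n (n - k)"
  by (simp add: qbinom_def mult.commute)



lemma ph_snoc: "i \<le> length p \<Longrightarrow> path_height (p @ [b]) i = path_height p i"
  unfolding path_height_def by (rule sum.cong) (auto simp: nth_append)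

lemma ph_snoc_last: "path_height (p @ [b]) (Suc (length p)) = path_height p (length p) + (if b then 1 else -1)"
proof -
  have "(\<Sum>j<length p. if (p @ [b]) ! j then 1 else -1) = (\<Sum>j<length p. if p ! j then 1 else (-1::int))"
    by (rule sum.cong) (auto simp: nth_append)
  then show ?thesis unfolding path_height_def by (simp add: nth_append)
qed

lemma ph_le: "path_height p i \<le> int i"
proof -
  have "path_height p i \<le> (\<Sum>j<i. 1)" unfolding path_height_def by (rule sum_mono) auto
  then show ?thesis by simp
qed

lemma B_empty: "s < t \<Longrightarrow> ballot_paths s t = {}"
  unfolding ballot_paths_def by force

lemma B00: "ballot_paths 0 0 = {[]}"
  unfolding ballot_paths_def by (auto simp: path_height_def)

lemma finite_B: "finite (ballot_paths s t)"
proof -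
  have "ballot_paths s t \<subseteq> {xs. set xs \<subseteq> UNIV \<and> length xs = s + t}" unfolding ballot_paths_def by auto
  moreover have "finite {xs. set xs \<subseteq> (UNIV::bool set) \<and> length xs = s + t}"
    by (rule finite_lists_length_eq) simp
  ultimately show ?thesis by (rule finite_subset)
qed

lemma snoc_mem: "p @ [b] \<in> ballot_paths s t \<longleftrightarrow>
   Suc (length p) = s + t \<and> path_height p (length p) + (if b then 1 else -1) = int s - int t
   \<and> (\<forall>i\<le>length p. 0 \<le> path_height p i) \<and> 0 \<le> int s - int t"
proof
  assume a: "p @ [b] \<in> ballot_paths s t"
  then have l: "Suc (length p) = s + t" and h: "path_height (p @ [b]) (s + t) = int s - int t"
    and nn: "\<forall>i\<le>s + t. 0 \<le> path_height (p @ [b]) i" unfolding ballot_paths_def by auto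
  have "\<forall>i\<le>length p. 0 \<le> path_height p i"
  proof (intro allI impI)
    fix i assume "i \<le> length p"
    then have "0 \<le> path_height (p @ [b]) i" using nn l by simp
    then show "0 \<le> path_height p i" using \<open>i \<le> length p\<close> ph_snoc[of i p b] by simp
  qed
  moreover have "path_height p (length p) + (if b then 1 else -1) = int s - int t"
    using h l ph_snoc_last[of p b] by simp
  moreover have "0 \<le> int s - int t" using nn h l by auto
  ultimately show "Suc (length p) = s + t \<and> path_height p (length p) + (if b then 1 else -1) = int s - int t
   \<and> (\<forall>i\<le>length p. 0 \<le> path_height p i) \<and> 0 \<le> int s - int t" using l by blast
next
  assume a: "Suc (length p) = s + t \<and> path_height p (length p) + (if b then 1 else -1) = int s - int t
   \<and> (\<forall>i\<le>length p. 0 \<le> path_height p i) \<and> 0 \<le> int s - int t"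
  have "\<forall>i\<le>s + t. 0 \<le> path_height (p @ [b]) i"
  proof (intro allI impI)
    fix i assume i: "i \<le> s + t"
    show "0 \<le> path_height (p @ [b]) i"
    proof (cases "i \<le> length p")
      case True then show ?thesis using a ph_snoc[of i p b] by auto
    next
      case False then have "i = Suc (length p)" using i a by simp
      then show ?thesis using a ph_snoc_last[of p b] by simp
    qed
  qed
  moreover have "path_height (p @ [b]) (s + t) = int s - int t"
    using a ph_snoc_last[of p b] by (simp del: of_nat_Suc add: a[THEN conjunct1, symmetric])
  ultimately show "p @ [b] \<in> ballot_paths s t" using a unfolding ballot_paths_def by simp
qed

lemma B_mem: "p \<in> ballot_paths s t \<longleftrightarrow> length p = s + t \<and> path_height p (length p) = int s - int t
   \<and> (\<forall>i\<le>length p. 0 \<le> path_height p i)"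
  unfolding ballot_paths_def by auto

lemma snoc_True_mem: "p @ [True] \<in> ballot_paths (Suc s) t \<longleftrightarrow> p \<in> ballot_paths s t"
proof -
  have "p @ [True] \<in> ballot_paths (Suc s) t \<longleftrightarrow>
   Suc (length p) = Suc s + t \<and> path_height p (length p) + 1 = int (Suc s) - int t
   \<and> (\<forall>i\<le>length p. 0 \<le> path_height p i) \<and> 0 \<le> int (Suc s) - int t"
    by (simp only: snoc_mem if_True)
  also have "\<dots> \<longleftrightarrow> p \<in> ballot_paths s t" unfolding B_mem by auto
  finally show ?thesis .
qed

lemma snoc_False_mem: assumes "t < s" shows "p @ [False] \<in> ballot_paths s (Suc t) \<longleftrightarrow> p \<in> ballot_paths s t"
proof -
  have "p @ [False] \<in> ballot_paths s (Suc t) \<longleftrightarrow>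
   Suc (length p) = s + Suc t \<and> path_height p (length p) + -1 = int s - int (Suc t)
   \<and> (\<forall>i\<le>length p. 0 \<le> path_height p i) \<and> 0 \<le> int s - int (Suc t)"
    by (simp only: snoc_mem if_False)
  also have "\<dots> \<longleftrightarrow> p \<in> ballot_paths s t" using \<open>t < s\<close> unfolding B_mem by auto
  finally show ?thesis .
qed

lemma B_True: "{p \<in> ballot_paths (Suc s) t. p \<noteq> [] \<and> last p} = (\<lambda>p. p @ [True]) ` ballot_paths s t"
proof (intro set_eqI iffI)
  fix p assume "p \<in> {p \<in> ballot_paths (Suc s) t. p \<noteq> [] \<and> last p}"
  then have p: "p \<in> ballot_paths (Suc s) t" "p \<noteq> []" "last p" by auto
  then have e: "p = butlast p @ [True]" by (metis append_butlast_last_id)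
  have "butlast p @ [True] \<in> ballot_paths (Suc s) t" using p(1) e by simp
  then have "butlast p \<in> ballot_paths s t" by (simp only: snoc_True_mem)
  then show "p \<in> (\<lambda>p. p @ [True]) ` ballot_paths s t" using e by blast
next
  fix p assume "p \<in> (\<lambda>p. p @ [True]) ` ballot_paths s t"
  then obtain p' where p': "p = p' @ [True]" "p' \<in> ballot_paths s t" by auto
  have "p' @ [True] \<in> ballot_paths (Suc s) t" using p'(2) by (simp only: snoc_True_mem)
  then show "p \<in> {p \<in> ballot_paths (Suc s) t. p \<noteq> [] \<and> last p}" using p' by auto
qed

lemma B_False: assumes "t < s" shows "{p \<in> ballot_paths s (Suc t). p \<noteq> [] \<and> \<not> last p} = (\<lambda>p. p @ [False]) ` ballot_paths s t"
proof (intro set_eqI iffI)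
  fix p assume "p \<in> {p \<in> ballot_paths s (Suc t). p \<noteq> [] \<and> \<not> last p}"
  then have p: "p \<in> ballot_paths s (Suc t)" "p \<noteq> []" "\<not> last p" by auto
  then have e: "p = butlast p @ [False]" by (metis append_butlast_last_id)
  have "butlast p @ [False] \<in> ballot_paths s (Suc t)" using p(1) e by simp
  then have "butlast p \<in> ballot_paths s t" using snoc_False_mem[OF \<open>t < s\<close>] by simp
  then show "p \<in> (\<lambda>p. p @ [False]) ` ballot_paths s t" using e by blast
next
  fix p assume "p \<in> (\<lambda>p. p @ [False]) ` ballot_paths s t"
  then obtain p' where p': "p = p' @ [False]" "p' \<in> ballot_paths s t" by auto
  have "p' @ [False] \<in> ballot_paths s (Suc t)" using p'(2) using snoc_False_mem[OF \<open>t < s\<close>] by simp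
  then show "p \<in> {p \<in> ballot_paths s (Suc t). p \<noteq> [] \<and> \<not> last p}" using p' by auto
qed

lemma B_False0: "{p \<in> ballot_paths s 0. p \<noteq> [] \<and> \<not> last p} = {}"
proof (rule ccontr)
  assume "{p \<in> ballot_paths s 0. p \<noteq> [] \<and> \<not> last p} \<noteq> {}"
  then obtain p where p: "p \<in> ballot_paths s 0" "p \<noteq> []" "\<not> last p" by auto
  then have e: "p = butlast p @ [False]" by (metis append_butlast_last_id)
  have "butlast p @ [False] \<in> ballot_paths s 0" using p(1) e by simp
  then have "Suc (length (butlast p)) = s + 0 \<and> path_height (butlast p) (length (butlast p)) + -1 = int s - int 0"
    by (simp only: snoc_mem if_False)
  then have "Suc (length (butlast p)) = s" "path_height (butlast p) (length (butlast p)) = int s + 1"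
    by auto
  then show False using ph_le[of "butlast p" "length (butlast p)"] by simp
qed

lemma valleys_bound: "i \<in> valleys p \<Longrightarrow> i < length p"
  unfolding valleys_def by auto

lemma finite_valleys: "finite (valleys p)"
  by (rule finite_subset[of _ "{..<length p}"]) (auto dest: valleys_bound)

lemma finite_returns: "finite (returns p)"
  by (rule finite_subset[OF _ finite_valleys[of p]]) (auto simp: returns_def)

lemma returns_bound: "i \<in> returns p \<Longrightarrow> i < length p"
  unfolding returns_def by (auto dest: valleys_bound)

lemma valleys_snoc: "valleys (p @ [b]) = valleys p \<union> (if b \<and> p \<noteq> [] \<and> \<not> last p then {length p} else {})"
proof (intro set_eqI)
  fix i
  show "i \<in> valleys (p @ [b]) \<longleftrightarrow> i \<in> valleys p \<union> (if b \<and> p \<noteq> [] \<and> \<not> last p then {length p} else {})"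
  proof (cases "i < length p")
    case True then show ?thesis by (auto simp: valleys_def nth_append)
  next
    case False
    show ?thesis
    proof (cases "i = length p")
      case True
      then show ?thesis using False by (auto simp: valleys_def nth_append last_conv_nth)
    next
      case False
      then show ?thesis using \<open>\<not> i < length p\<close> by (auto simp: valleys_def)
    qed
  qed
qed

lemma returns_snoc: "returns (p @ [b]) = returns p \<union>
   (if b \<and> p \<noteq> [] \<and> \<not> last p \<and> path_height p (length p) = 0 then {length p} else {})"
proof -
  have "\<And>i. i \<in> valleys (p @ [b]) \<Longrightarrow> path_height (p @ [b]) i = path_height p i"
    by (rule ph_snoc) (auto dest: valleys_bound)
  then show ?thesis unfolding returns_def valleys_snoc by auto
qed

lemma maj_snoc: "maj (p @ [b]) = maj p + (if b \<and> p \<noteq> [] \<and> \<not> last p then length p else 0)"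
proof -
  have "length p \<notin> valleys p" by (auto dest: valleys_bound)
  then show ?thesis unfolding maj_def valleys_snoc using finite_valleys[of p] by auto
qed



lemma split_B: assumes "0 < s + t"
  shows "(\<Sum>p\<in>ballot_paths s t. g p) = (\<Sum>p\<in>{p\<in>ballot_paths s t. p \<noteq> [] \<and> last p}. g p)
          + (\<Sum>p\<in>{p\<in>ballot_paths s t. p \<noteq> [] \<and> \<not> last p}. g p)"
proof -
  have e: "ballot_paths s t = {p\<in>ballot_paths s t. p \<noteq> [] \<and> last p} \<union> {p\<in>ballot_paths s t. p \<noteq> [] \<and> \<not> last p}"
    using assms by (auto simp: B_mem)
  show ?thesis
    by (subst e, rule sum.union_disjoint) (auto intro: finite_subset[OF _ finite_B])
qed

context fixes q :: real assumes q: "0 < q"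
begin

definition gM :: "nat set \<Rightarrow> real" where "gM M = q powr (- (\<Sum>x\<in>M. real x) / 2)"
definition fR :: "nat \<Rightarrow> nat set \<Rightarrow> real" where "fR r A = (\<Sum>M\<in>{M. M \<subseteq> A \<and> r \<le> card M}. gM M)"
definition w :: "nat \<Rightarrow> bool list \<Rightarrow> real" where "w r p = q ^ maj p * fR r (returns p)"
definition T :: "nat \<Rightarrow> nat \<Rightarrow> nat \<Rightarrow> real" where "T s t r = (\<Sum>p\<in>ballot_paths s t. w r p)"
definition TU :: "nat \<Rightarrow> nat \<Rightarrow> nat \<Rightarrow> real" where
  "TU s t r = (\<Sum>p\<in>{p\<in>ballot_paths s t. p \<noteq> [] \<and> last p}. w r p)"
definition TD :: "nat \<Rightarrow> nat \<Rightarrow> nat \<Rightarrow> real" where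
  "TD s t r = (\<Sum>p\<in>{p\<in>ballot_paths s t. p \<noteq> [] \<and> \<not> last p}. w r p)"

lemma fR_empty: "fR r {} = (if r = 0 then 1 else 0)"
proof -
  have "{M. M \<subseteq> {} \<and> r \<le> card M} = (if r = 0 then {{}} else {})" by auto
  then show ?thesis using q by (simp add: fR_def gM_def)
qed

lemma fR_insert: assumes A: "finite A" and x: "x \<notin> A"
  shows "fR r (insert x A) = fR r A + q powr (- real x / 2) * fR (r - 1) A"
proof -
  let ?L = "{M. M \<subseteq> A \<and> r \<le> card M}"
  let ?R = "{N. N \<subseteq> A \<and> r - 1 \<le> card N}"
  have set: "{M. M \<subseteq> insert x A \<and> r \<le> card M} = ?L \<union> insert x ` ?R"
  proof (intro set_eqI iffI)
    fix M assume "M \<in> {M. M \<subseteq> insert x A \<and> r \<le> card M}"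
    then have M: "M \<subseteq> insert x A" "r \<le> card M" by auto
    show "M \<in> ?L \<union> insert x ` ?R"
    proof (cases "x \<in> M")
      case False then show ?thesis using M by auto
    next
      case True
      have fM: "finite M" using M(1) A finite_subset by auto
      have "M = insert x (M - {x})" using True by auto
      moreover have "M - {x} \<in> ?R" using M fM True by (auto simp: card_Diff_singleton)
      ultimately show ?thesis by blast
    qed
  next
    fix M assume "M \<in> ?L \<union> insert x ` ?R"
    then show "M \<in> {M. M \<subseteq> insert x A \<and> r \<le> card M}"
    proof
      assume "M \<in> ?L" then show ?thesis by auto
    next
      assume "M \<in> insert x ` ?R"
      then obtain N where N: "M = insert x N" "N \<subseteq> A" "r - 1 \<le> card N" by auto
      have "finite N" using N A finite_subset by auto
      moreover have "x \<notin> N" using N x by auto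
      ultimately have "card M = Suc (card N)" using N by simp
      then show ?thesis using N by auto
    qed
  qed
  have disj: "?L \<inter> insert x ` ?R = {}" using x by auto
  have inj: "inj_on (insert x) ?R" using x by (auto simp: inj_on_def insert_ident)
  have finL: "finite ?L" by (rule finite_subset[of _ "Pow A"]) (use A in auto)
  have finR: "finite ?R" by (rule finite_subset[of _ "Pow A"]) (use A in auto)
  have gins: "gM (insert x N) = q powr (- real x / 2) * gM N" if "N \<in> ?R" for N
  proof -
    have "finite N" "x \<notin> N" using that A x finite_subset by auto
    then have "(\<Sum>y\<in>insert x N. real y) = real x + (\<Sum>y\<in>N. real y)" by simp
    then have e: "- (\<Sum>y\<in>insert x N. real y) / 2 = - real x / 2 + - (\<Sum>y\<in>N. real y) / 2" by simp
    show ?thesis unfolding gM_def e by (rule powr_add)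
  qed
  have "fR r (insert x A) = (\<Sum>M\<in>?L. gM M) + (\<Sum>M\<in>insert x ` ?R. gM M)"
    unfolding fR_def set by (rule sum.union_disjoint) (use finL finR disj in auto)
  also have "(\<Sum>M\<in>insert x ` ?R. gM M) = (\<Sum>N\<in>?R. gM (insert x N))"
    by (rule sum.reindex[OF inj, unfolded comp_def])
  also have "\<dots> = q powr (- real x / 2) * fR (r - 1) A"
    unfolding fR_def sum_distrib_left by (rule sum.cong) (auto simp: gins)
  finally show ?thesis unfolding fR_def by simp
qed

lemma w_F: "w r (p @ [False]) = w r p"
  unfolding w_def by (simp add: maj_snoc returns_snoc)

lemma w_T1: "p = [] \<or> last p \<Longrightarrow> w r (p @ [True]) = w r p"
  unfolding w_def by (auto simp: maj_snoc returns_snoc)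

lemma w_T2: "p \<noteq> [] \<Longrightarrow> \<not> last p \<Longrightarrow> path_height p (length p) \<noteq> 0 \<Longrightarrow>
   w r (p @ [True]) = q ^ length p * w r p"
  unfolding w_def by (simp add: maj_snoc returns_snoc power_add)

lemma aux_pow: "q ^ (2*t) * q powr (- real (2*t) / 2) = q ^ t"
proof -
  have "q powr (- real (2*t) / 2) = inverse (q ^ t)"
    using q by (simp add: powr_minus powr_realpow)
  moreover have "q ^ (2*t) = q ^ t * q ^ t" by (simp add: power_add[symmetric] mult_2)
  ultimately show ?thesis using q by simp
qed

lemma w_T3: assumes "p \<noteq> []" "\<not> last p" "path_height p (length p) = 0" "length p = 2*t"
  shows "w r (p @ [True]) = q ^ (2*t) * w r p + q ^ t * w (r - 1) p"
proof -
  have R: "returns (p @ [True]) = insert (length p) (returns p)" using assms by (simp add: returns_snoc)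
  have M: "maj (p @ [True]) = maj p + 2*t" using assms by (simp add: maj_snoc)
  have nin: "length p \<notin> returns p" by (auto dest: returns_bound)
  have "w r (p @ [True]) = q ^ maj p * q ^ (2*t) * (fR r (returns p) + q powr (- real (2*t) / 2) * fR (r - 1) (returns p))"
    unfolding w_def R M using fR_insert[OF finite_returns nin] assms(4) by (simp add: power_add)
  also have "\<dots> = q ^ (2*t) * w r p + (q ^ (2*t) * q powr (- real (2*t) / 2)) * w (r - 1) p"
    unfolding w_def by (simp add: algebra_simps)
  finally show ?thesis by (simp only: aux_pow)
qed

lemma T_split: "0 < s + t \<Longrightarrow> T s t r = TU s t r + TD s t r"
  unfolding T_def TU_def TD_def by (rule split_B)

lemma TD_Suc: assumes "t < s" shows "TD s (Suc t) r = T s t r"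
proof -
  have inj: "inj_on (\<lambda>p. p @ [False]) (ballot_paths s t)" by (auto simp: inj_on_def)
  have "TD s (Suc t) r = (\<Sum>p\<in>(\<lambda>p. p @ [False]) ` ballot_paths s t. w r p)"
    unfolding TD_def B_False[OF assms] ..
  also have "\<dots> = (\<Sum>p\<in>ballot_paths s t. w r (p @ [False]))"
    by (rule sum.reindex[OF inj, unfolded comp_def])
  finally show ?thesis unfolding T_def w_F .
qed

lemma TD_0: "TD s 0 r = 0"
  unfolding TD_def B_False0 by simp

lemma TU_Suc: "TU (Suc s) t r = (\<Sum>p\<in>ballot_paths s t. w r (p @ [True]))"
proof -
  have inj: "inj_on (\<lambda>p. p @ [True]) (ballot_paths s t)" by (auto simp: inj_on_def)
  have "TU (Suc s) t r = (\<Sum>p\<in>(\<lambda>p. p @ [True]) ` ballot_paths s t. w r p)"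
    unfolding TU_def B_True ..
  also have "\<dots> = (\<Sum>p\<in>ballot_paths s t. w r (p @ [True]))"
    by (rule sum.reindex[OF inj, unfolded comp_def])
  finally show ?thesis .
qed

lemma TU_tt: assumes "0 < t" shows "TU t t r = 0"
proof -
  obtain t' where t: "t = Suc t'" using assms by (cases t) auto
  show ?thesis unfolding t TU_Suc using B_empty[of t' "Suc t'"] by simp
qed

lemma ST_ne: assumes "s \<noteq> t" "0 < s + t"
  shows "(\<Sum>p\<in>ballot_paths s t. w r (p @ [True])) = TU s t r + q ^ (s + t) * TD s t r"
proof -
  have "(\<Sum>p\<in>ballot_paths s t. w r (p @ [True])) = (\<Sum>p\<in>{p\<in>ballot_paths s t. p \<noteq> [] \<and> last p}. w r (p @ [True]))
          + (\<Sum>p\<in>{p\<in>ballot_paths s t. p \<noteq> [] \<and> \<not> last p}. w r (p @ [True]))"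
    by (rule split_B[OF assms(2)])
  also have "(\<Sum>p\<in>{p\<in>ballot_paths s t. p \<noteq> [] \<and> last p}. w r (p @ [True])) = TU s t r"
    unfolding TU_def by (rule sum.cong) (auto simp: w_T1)
  also have "(\<Sum>p\<in>{p\<in>ballot_paths s t. p \<noteq> [] \<and> \<not> last p}. w r (p @ [True])) = q ^ (s + t) * TD s t r"
    unfolding TD_def sum_distrib_left
  proof (rule sum.cong)
    fix p assume "p \<in> {p\<in>ballot_paths s t. p \<noteq> [] \<and> \<not> last p}"
    then have p: "p \<noteq> []" "\<not> last p" "length p = s + t" "path_height p (length p) = int s - int t"
      by (auto simp: B_mem)
    then have "path_height p (length p) \<noteq> 0" using assms by simp
    then show "w r (p @ [True]) = q ^ (s + t) * w r p" using w_T2 p by simp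
  qed simp
  finally show ?thesis .
qed

lemma ST_eq: assumes "0 < t"
  shows "(\<Sum>p\<in>ballot_paths t t. w r (p @ [True])) = TU t t r + q ^ (2*t) * TD t t r + q ^ t * TD t t (r - 1)"
proof -
  have "(\<Sum>p\<in>ballot_paths t t. w r (p @ [True])) = (\<Sum>p\<in>{p\<in>ballot_paths t t. p \<noteq> [] \<and> last p}. w r (p @ [True]))
          + (\<Sum>p\<in>{p\<in>ballot_paths t t. p \<noteq> [] \<and> \<not> last p}. w r (p @ [True]))"
    by (rule split_B) (use assms in simp)
  also have "(\<Sum>p\<in>{p\<in>ballot_paths t t. p \<noteq> [] \<and> last p}. w r (p @ [True])) = TU t t r"
    unfolding TU_def by (rule sum.cong) (auto simp: w_T1)
  also have "(\<Sum>p\<in>{p\<in>ballot_paths t t. p \<noteq> [] \<and> \<not> last p}. w r (p @ [True]))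
        = q ^ (2*t) * TD t t r + q ^ t * TD t t (r - 1)"
    unfolding TD_def sum_distrib_left sum.distrib[symmetric]
  proof (rule sum.cong)
    fix p assume "p \<in> {p\<in>ballot_paths t t. p \<noteq> [] \<and> \<not> last p}"
    then have p: "p \<noteq> []" "\<not> last p" "length p = 2 * t" "path_height p (length p) = 0"
      by (auto simp: B_mem)
    show "w r (p @ [True]) = q ^ (2*t) * w r p + q ^ t * w (r - 1) p" by (rule w_T3[OF p(1,2,4,3)])
  qed simp
  finally show ?thesis by simp
qed

lemma ST_00: "(\<Sum>p\<in>ballot_paths 0 0. w r (p @ [True])) = (if r = 0 then 1 else 0)"
proof -
  have "w r [True] = w r []" using w_T1[of "[]" r] by simp
  also have "\<dots> = (if r = 0 then 1 else 0)"
    by (simp add: w_def maj_def valleys_def returns_def fR_empty)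
  finally show ?thesis by (simp add: B00)
qed


definition G :: "nat \<Rightarrow> nat \<Rightarrow> real" where "G n k = poly (gp n k) q"
definition F :: "nat \<Rightarrow> nat \<Rightarrow> nat \<Rightarrow> real" where
  "F s t r = (if r \<le> t then q ^ (Suc r choose 2) * G (s + t) (t - r) else 0)"

lemma G_0: "G n 0 = 1" by (cases n) (simp_all add: G_def)
lemma G_zero: "n < k \<Longrightarrow> G n k = 0" by (simp add: G_def gp_zero)
lemma GP1: "G (Suc n) (Suc k) = G n k + q ^ Suc k * G n (Suc k)" by (simp add: G_def poly_monom)
lemma Gsym: assumes "k \<le> n" shows "G n k = G n (n - k)"
  unfolding G_def qbinom_gp[symmetric] qbinom_sym[OF assms] ..

lemma GP2: assumes "k \<le> n" shows "G (Suc n) (Suc k) = q ^ (n - k) * G n k + G n (Suc k)"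
proof (cases "k = n")
  case True
  have "G (Suc n) (Suc n) = G (Suc n) 0" using Gsym[of "Suc n" "Suc n"] by simp
  moreover have "G n n = G n 0" using Gsym[of n n] by simp
  ultimately show ?thesis using True by (simp add: G_0 G_zero)
next
  case False
  then have kn: "k < n" using assms by simp
  define j where "j = n - k - 1"
  have nk: "n - k = Suc j" using kn j_def by simp
  have "G (Suc n) (Suc k) = G (Suc n) (Suc n - Suc k)" using Gsym[of "Suc k" "Suc n"] kn by simp
  also have "\<dots> = G (Suc n) (Suc j)" using nk by simp
  also have "\<dots> = G n j + q ^ Suc j * G n (Suc j)" by (rule GP1)
  also have "G n j = G n (Suc k)" using Gsym[of j n] j_def kn by (simp add: Suc_diff_Suc)
  also have "G n (Suc j) = G n k"
  proof -
    have "n - Suc j = k" using nk kn by simp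
    then show ?thesis using Gsym[of "Suc j" n] nk kn by simp
  qed
  finally show ?thesis using nk by simp
qed

lemma I2: assumes "j \<le> m"
  shows "G (Suc (Suc m)) (Suc j) = G (Suc m) j + G (Suc m) (Suc j) + (q ^ Suc m - 1) * G m j"
proof -
  have x1: "G (Suc m) (Suc j) = G m j + q ^ Suc j * G m (Suc j)" by (rule GP1)
  have x2: "G (Suc m) (Suc j) = q ^ (m - j) * G m j + G m (Suc j)" by (rule GP2[OF assms])
  have pw: "q ^ Suc j * q ^ (m - j) = q ^ Suc m" using assms by (simp add: power_add[symmetric])
  have "q ^ Suc j * G (Suc m) (Suc j) = (q ^ Suc j * q ^ (m - j)) * G m j + q ^ Suc j * G m (Suc j)"
    by (subst x2) (simp add: algebra_simps)
  also have "\<dots> = q ^ Suc m * G m j + (G (Suc m) (Suc j) - G m j)" using pw x1 by simp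
  finally have e: "q ^ Suc j * G (Suc m) (Suc j) = q ^ Suc m * G m j + (G (Suc m) (Suc j) - G m j)" .
  have "G (Suc (Suc m)) (Suc j) = G (Suc m) j + q ^ Suc j * G (Suc m) (Suc j)" by (rule GP1)
  also have "\<dots> = G (Suc m) j + G (Suc m) (Suc j) + (q ^ Suc m - 1) * G m j"
    unfolding e by (simp add: algebra_simps)
  finally show ?thesis .
qed

lemma J: assumes "Suc j \<le> t"
  shows "G (Suc (2*t)) (Suc j) = G (2*t) j + q ^ (2*t) * G (2*t - 1) j + q ^ Suc j * G (2*t - 1) (Suc j)"
proof -
  define m where "m = 2*t - 1"
  have tm: "2*t = Suc m" using assms m_def by simp
  have jm: "j \<le> m" using assms m_def by simp
  have pw: "q ^ Suc j * q ^ (m - j) = q ^ Suc m" using jm by (simp add: power_add[symmetric])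
  have "G (Suc (Suc m)) (Suc j) = G (Suc m) j + q ^ Suc j * G (Suc m) (Suc j)" by (rule GP1)
  also have "G (Suc m) (Suc j) = q ^ (m - j) * G m j + G m (Suc j)" by (rule GP2[OF jm])
  finally have "G (Suc (Suc m)) (Suc j) = G (Suc m) j + (q ^ Suc j * q ^ (m - j)) * G m j + q ^ Suc j * G m (Suc j)"
    by (simp add: algebra_simps)
  then show ?thesis unfolding tm pw m_def[symmetric] by simp
qed

lemma choose2: "Suc r choose 2 = r + (r choose 2)"
proof -
  have "(Suc r) choose (Suc 1) = (r choose 1) + (r choose (Suc 1))" by (rule binomial_Suc_Suc)
  then show ?thesis by (simp add: numeral_2_eq_2)
qed

lemma main: "t < s \<Longrightarrow> T s t r = F s t r"
proof (induction "s + t" arbitrary: s t r rule: less_induct)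
  case less
  obtain s' where s: "s = Suc s'" using less.prems by (cases s) auto
  show ?case
  proof (cases t)
    case 0
    have "T s t r = TU s 0 r" using T_split[of s t r] 0 s by (simp add: TD_0)
    also have "\<dots> = (\<Sum>p\<in>ballot_paths s' 0. w r (p @ [True]))" unfolding s TU_Suc ..
    also have "\<dots> = F s t r"
    proof (cases "s' = 0")
      case True
      have "q ^ (Suc 0 choose 2) = 1" by (simp only: choose2[of 0] binomial_0_Suc numeral_2_eq_2) simp
      then show ?thesis using True 0 s by (simp add: ST_00 F_def G_0)
    next
      case False
      have "(\<Sum>p\<in>ballot_paths s' 0. w r (p @ [True])) = TU s' 0 r + q ^ (s' + 0) * TD s' 0 r"
        by (rule ST_ne) (use False in auto)
      also have "\<dots> = T s' 0 r" using T_split[of s' 0 r] False by (simp add: TD_0)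
      also have "\<dots> = F s' 0 r" by (rule less.hyps) (use s 0 False in auto)
      also have "\<dots> = F s t r" using 0 by (simp add: F_def G_0)
      finally show ?thesis .
    qed
    finally show ?thesis .
  next
    case (Suc t')
    note t = Suc
    show ?thesis
    proof (cases "Suc t < s")
      case True
      have st: "s' \<noteq> t" "t' < s" "t' < s'" "t < s'" using True s t by auto
      have "T s t r = TU s t r + TD s t r" by (rule T_split) (use s in simp)
      also have "TD s t r = T s t' r" unfolding t by (rule TD_Suc[OF st(2)])
      also have "TU s t r = TU s' t r + q ^ (s' + t) * TD s' t r"
        unfolding s TU_Suc by (rule ST_ne) (use st in auto)
      also have "TU s' t r = T s' t r - TD s' t r" using T_split[of s' t r] t by simp
      also have "TD s' t r = T s' t' r" unfolding t by (rule TD_Suc[OF st(3)])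
      finally have e: "T s t r = T s t' r + T s' t r + (q ^ (s' + t) - 1) * T s' t' r"
        by (simp add: algebra_simps)
      have h1: "T s t' r = F s t' r" by (rule less.hyps) (use st t in auto)
      have h2: "T s' t r = F s' t r" by (rule less.hyps) (use st t s in auto)
      have h3: "T s' t' r = F s' t' r" by (rule less.hyps) (use st t s in auto)
      have "F s t r = F s t' r + F s' t r + (q ^ (s' + t) - 1) * F s' t' r"
      proof -
        consider "t < r" | "r = t" | "r \<le> t'" using t by linarith
        then show ?thesis
        proof cases
          case 1 then show ?thesis using t by (simp add: F_def)
        next
          case 2 then show ?thesis using t by (simp add: F_def G_0)
        next
          case 3
          define j where "j = t' - r"
          define m where "m = s' + t'"
          have jm: "j \<le> m" using j_def m_def by simp
          have a1: "s + t = Suc (Suc m)" "s + t' = Suc m" "s' + t = Suc m" "s' + t' = m"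
            using s t m_def by auto
          have a2: "t - r = Suc j" "t' - r = j" using 3 t j_def by auto
          have c: "r \<le> t" "r \<le> t'" using 3 t by auto
          show ?thesis unfolding F_def a1 a2 I2[OF jm] using c
            by (simp add: algebra_simps)
        qed
      qed
      then show ?thesis by (simp only: e h1 h2 h3)
    next
      case False
      then have s2: "s = Suc t" using less.prems by simp
      have st: "t' < s" "t' < t" "0 < t" using s2 t by auto
      have "T s t r = TU s t r + TD s t r" by (rule T_split) (use s in simp)
      also have "TD s t r = T s t' r" unfolding t by (rule TD_Suc[OF st(1)])
      also have "TU s t r = TU t t r + q ^ (2*t) * TD t t r + q ^ t * TD t t (r - 1)"
        unfolding s2 TU_Suc by (rule ST_eq[OF st(3)])
      also have "TU t t r = 0" by (rule TU_tt[OF st(3)])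
      also have "TD t t r = T t t' r" unfolding t by (rule TD_Suc) simp
      also have "TD t t (r - 1) = T t t' (r - 1)" unfolding t by (rule TD_Suc) simp
      finally have e: "T s t r = T s t' r + q ^ (2*t) * T t t' r + q ^ t * T t t' (r - 1)"
        by simp
      have h1: "T s t' r = F s t' r" by (rule less.hyps) (use st t in auto)
      have h2: "T t t' r = F t t' r" by (rule less.hyps) (use st t s2 in auto)
      have h3: "T t t' (r - 1) = F t t' (r - 1)" by (rule less.hyps) (use st t s2 in auto)
      have a1: "s + t = Suc (2*t)" "s + t' = 2*t" "t + t' = 2*t - 1" using s2 t by auto
      have "F s t r = F s t' r + q ^ (2*t) * F t t' r + q ^ t * F t t' (r - 1)"
      proof -
        have "t < r \<or> r = t \<or> r = 0 \<or> (\<exists>r'. r = Suc r' \<and> r' < t')" using t by (cases r) auto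
        then consider "t < r" | "r = t" | "r = 0" | r' where "r = Suc r'" "r' < t'" by blast
        then show ?thesis
        proof cases
          case 1 then show ?thesis using t by (simp add: F_def)
        next
          case 2
          have "Suc t choose 2 = t + (t choose 2)" by (rule choose2)
          then have "q ^ (Suc t choose 2) = q ^ t * q ^ (Suc t' choose 2)" using t by (simp add: power_add)
          then show ?thesis using 2 t by (simp add: F_def G_0)
        next
          case 3
          have JJ: "G (Suc (2*t)) (Suc t') = G (2*t) t' + q ^ (2*t) * G (2*t - 1) t' + q ^ Suc t' * G (2*t - 1) (Suc t')"
            by (rule J) (use t in simp)
          have sy: "G (2*t - 1) (Suc t') = G (2*t - 1) t'" using Gsym[of "Suc t'" "2*t - 1"] t by simp
          have q0: "q ^ (Suc 0 choose 2) = 1" by (simp only: choose2[of 0] binomial_0_Suc numeral_2_eq_2) simp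
          have f1: "F s t r = G (Suc (2*t)) (Suc t')" unfolding F_def a1 using 3 t q0 by simp
          have f2: "F s t' r = G (2*t) t'" unfolding F_def a1 using 3 q0 by simp
          have f3: "F t t' r = G (2*t - 1) t'" unfolding F_def a1 using 3 q0 by simp
          have f4: "F t t' (r - 1) = G (2*t - 1) t'" unfolding F_def a1 using 3 q0 by simp
          show ?thesis unfolding f1 f2 f3 f4 JJ sy using t by simp
        next
          case 4
          define j where "j = t' - r"
          have a2: "t - r = Suc j" "t' - r = j" "t' - r' = Suc j" using 4 t j_def by auto
          have JJ: "G (Suc (2*t)) (Suc j) = G (2*t) j + q ^ (2*t) * G (2*t - 1) j + q ^ Suc j * G (2*t - 1) (Suc j)"
            by (rule J) (use a2 t in simp)
          have c: "Suc r choose 2 = r + (r choose 2)" by (rule choose2)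
          have tt: "t = r + Suc j" using a2 4 t by simp
          have pw: "q ^ t * q ^ (r choose 2) = q ^ (Suc r choose 2) * q ^ Suc j"
            unfolding c tt by (simp add: power_add)
          have rt: "r \<le> t" "r \<le> t'" "r - 1 \<le> t'" "r - 1 = r'" using 4 t by auto
          have "F s t r = q ^ (Suc r choose 2) * G (Suc (2*t)) (Suc j)" unfolding F_def a1 a2 using rt by simp
          also have "\<dots> = q ^ (Suc r choose 2) * G (2*t) j + q ^ (2*t) * (q ^ (Suc r choose 2) * G (2*t - 1) j)
               + (q ^ t * q ^ (r choose 2)) * G (2*t - 1) (Suc j)"
            unfolding JJ pw by (simp add: algebra_simps)
          also have "\<dots> = F s t' r + q ^ (2*t) * F t t' r + q ^ t * F t t' (r - 1)"
            unfolding F_def a1 rt(4) a2 using rt 4 by (simp add: mult.assoc)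
          finally show ?thesis .
        qed
      qed
      then show ?thesis by (simp only: e h1 h2 h3)
    qed
  qed
qed

lemma marked_sum: "(\<Sum>D\<in>marked_paths s t r. q powr vmr D) = T s t r"
proof -
  have ms: "marked_paths s t r = Sigma (ballot_paths s t) (\<lambda>p. {M. M \<subseteq> returns p \<and> r \<le> card M})"
    unfolding marked_paths_def by auto
  have fin: "\<forall>p\<in>ballot_paths s t. finite {M. M \<subseteq> returns p \<and> r \<le> card M}"
    using finite_returns by (auto intro: finite_subset[of _ "Pow (returns _)"])
  have v: "q powr vmr (p, M) = q ^ maj p * gM M" for p M
  proof -
    have "vmr (p, M) = real (maj p) + - (\<Sum>x\<in>M. real x) / 2" unfolding vmr_def by simp
    then have "q powr vmr (p, M) = q powr real (maj p) * q powr (- (\<Sum>x\<in>M. real x) / 2)"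
      by (simp only: powr_add)
    then show ?thesis unfolding gM_def using q by (simp add: powr_realpow)
  qed
  have "(\<Sum>D\<in>marked_paths s t r. q powr vmr D)
     = (\<Sum>p\<in>ballot_paths s t. \<Sum>M\<in>{M. M \<subseteq> returns p \<and> r \<le> card M}. q powr vmr (p, M))"
    unfolding ms by (subst sum.Sigma[OF finite_B fin]) (simp add: case_prod_beta')
  also have "\<dots> = T s t r" unfolding T_def w_def fR_def v sum_distrib_left ..
  finally show ?thesis .
qed

lemma final: assumes "0 < s"
  shows "(\<Sum>D\<in>marked_paths s s r. q powr vmr D) = q ^ ((r + 1) choose 2) * poly (qbinom (2 * s - 1) (s + r)) q"
proof -
  obtain s' where s: "s = Suc s'" using assms by (cases s) auto
  have "T s s r = TU s s r + TD s s r" by (rule T_split) (use assms in simp)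
  also have "TU s s r = 0" by (rule TU_tt[OF assms])
  also have "TD s s r = T s s' r" unfolding s by (rule TD_Suc) simp
  also have "T s s' r = F s s' r" by (rule main) (use s in simp)
  finally have e: "T s s r = F s s' r" by simp
  have n: "2 * s - 1 = s + s'" using s by simp
  show ?thesis
  proof (cases "r \<le> s'")
    case True
    have "qbinom (2 * s - 1) (s + r) = qbinom (s + s') (s' - r)"
      unfolding n using qbinom_sym[of "s + r" "s + s'"] True s by simp
    then show ?thesis unfolding marked_sum e F_def using True by (simp add: G_def qbinom_gp)
  next
    case False
    then have "qbinom (2 * s - 1) (s + r) = 0" unfolding n by (simp add: qbinom_def)
    then show ?thesis unfolding marked_sum e F_def using False by simp
  qed
qed

end

theorem lemma2p3:
  fixes s r :: nat and q :: real
  assumes "0 < s" and "0 < q"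
  shows "(\<Sum>D\<in>marked_paths s s r. q powr vmr D)
           = q ^ ((r + 1) choose 2) * poly (qbinom (2 * s - 1) (s + r)) q"
  by (rule final[OF assms(2) assms(1)])

end
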